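(* Let $L_f>0$, $R_0\ge1$ and $\epsilon>0$ be given. For problem dimension $n>2\lceil\sqrt{L_f}R_0/(8\sqrt\epsilon)\rceil$, there exists a smooth problem of the form described in the context with aggregate smoothness constant $L_f$ and $\|x^0-x^*\|\le R_0$ such that any DPM algorithm takes at least $\Omega(\sqrt{L_f}R_0/\sqrt\epsilon)$ communication rounds to find an $\epsilon$-optimal solution (a point $\bar x\in X$ with $f(\bar x)-f(x^* )\le\epsilon$).
   Context: Problem form: $\min_{x\in X}\{f(x):=\max_{p\in P}\sum_{i=1}^mp_if_i(x)-\rho^*(p)+u(x)\}$ with $X\subseteq\mathbb{R}^n$ closed convex, $P\subseteq\{p\in\mathbb{R}^m:\sum_ip_i=1,p\ge0\}$ closed convex, $\rho^*$, $u$ proper closed convex, and $f_i(x)=\max_{\pi_i\in\Pi_i}\langle A_ix,\pi_i\rangle-f_i^*(\pi_i)$; smooth means $A_i=I$, $f_i$ convex with Lipschitz gradient and $f_i^*$ its conjugate. $x^*$ is an optimal solution. The aggregate smoothness constant is $\max_{p\in P}L_p$, where $L_p$ is the Lipschitz constant of $\nabla\sum_ip_if_i$. $x^0=0$ is the initial point. A DPM algorithm on a star network (server plus workers, worker $i$ knowing only $f_i$, server knowing $u$, $\rho^*$, $P$) maintains a server memory $\mathcal M_s^t$ and for each worker primal and dual memories $\mathcal M_i^t$, $\mathcal M_i^{\pi,t}$, all $\{0\}$ at $t=0$. In each communication round $t$: each worker sends one vector from $\mathrm{span}(\mathcal M_i^{t-1})$ to the server and receives one vector from $\mathrm{span}(\mathcal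 M_s^{t-1})$; between rounds each worker may, any finite number of times, pick $\bar x\in\mathrm{span}$(its primal memory), $\bar\pi_i\in\mathrm{span}$(its dual memory), $\tau\ge0$, compute $\pi_i'\in\arg\max_{\pi_i\in\Pi_i}\langle A_i\bar x,\pi_i\rangle-f_i^*(\pi_i)-\frac\tau2\|\pi_i-\bar\pi_i\|^2$, add $A_i^\top\pi_i',A_i^\top\bar\pi_i$ to its primal memory and $\pi_i',A_i\bar x$ to its dual memory; and the server may, any finite number of times, add $\arg\min_{x\in X}u(x)+\frac\eta2\|x-\bar x\|^2$ for $\bar x\in\mathrm{span}$(its memory), $\eta>0$. The output after $t$ rounds lies in the span of all primal memories and the server memory. The $\Omega$ hides absolute constants. *)

theory Defs
  imports Complex_Main
begin

section \<open>Vectors of R^n, represented as functions nat => real vanishing from index n on\<close>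

type_synonym vec = "nat \<Rightarrow> real"

definition Vsp :: "nat \<Rightarrow> vec set" where
  "Vsp n = {x. \<forall>i\<ge>n. x i = 0}"

definition vzero :: vec where "vzero = (\<lambda>_. 0)"
definition vadd :: "vec \<Rightarrow> vec \<Rightarrow> vec" where "vadd x y = (\<lambda>i. x i + y i)"
definition vsub :: "vec \<Rightarrow> vec \<Rightarrow> vec" where "vsub x y = (\<lambda>i. x i - y i)"

definition ip :: "nat \<Rightarrow> vec \<Rightarrow> vec \<Rightarrow> real" where
  "ip n x y = (\<Sum>i<n. x i * y i)"

definition vnorm :: "nat \<Rightarrow> vec \<Rightarrow> real" where
  "vnorm n x = sqrt (ip n x x)"

definition vspan :: "vec set \<Rightarrow> vec set" where
  "vspan S = {v. \<exists>F c. finite F \<and> F \<subseteq> S \<and> v = (\<lambda>i. \<Sum>w\<in>F. c w * w i)}"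

definition convex_V :: "nat \<Rightarrow> vec set \<Rightarrow> bool" where
  "convex_V n S \<longleftrightarrow> S \<subseteq> Vsp n \<and>
     (\<forall>x\<in>S. \<forall>y\<in>S. \<forall>a::real. 0 \<le> a \<and> a \<le> 1 \<longrightarrow> (\<lambda>i. a * x i + (1 - a) * y i) \<in> S)"

definition conv_seq :: "nat \<Rightarrow> (nat \<Rightarrow> vec) \<Rightarrow> vec \<Rightarrow> bool" where
  "conv_seq n xs x \<longleftrightarrow> (\<forall>i<n. (\<lambda>k. xs k i) \<longlonglongrightarrow> x i)"

definition closed_V :: "nat \<Rightarrow> vec set \<Rightarrow> bool" where
  "closed_V n S \<longleftrightarrow> S \<subseteq> Vsp n \<and>
     (\<forall>xs x. (\<forall>k. xs k \<in> S) \<and> x \<in> Vsp n \<and> conv_seq n xs x \<longrightarrow> x \<in> S)"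

text \<open>An extended-valued function is represented by its effective domain D and its values on D.\<close>
definition convex_fun_on :: "vec set \<Rightarrow> (vec \<Rightarrow> real) \<Rightarrow> bool" where
  "convex_fun_on D g \<longleftrightarrow> (\<forall>x\<in>D. \<forall>y\<in>D. \<forall>a::real. 0 \<le> a \<and> a \<le> 1 \<longrightarrow>
      g (\<lambda>i. a * x i + (1 - a) * y i) \<le> a * g x + (1 - a) * g y)"

text \<open>Closed = closed epigraph.\<close>
definition closed_fun :: "nat \<Rightarrow> vec set \<Rightarrow> (vec \<Rightarrow> real) \<Rightarrow> bool" where
  "closed_fun n D g \<longleftrightarrow> (\<forall>xs ts x t. (\<forall>k. xs k \<in> D \<and> g (xs k) \<le> ts k) \<and> x \<in> Vsp n \<and>
      conv_seq n xs x \<and> ts \<longlonglongrightarrow> t \<longrightarrow> x \<in> D \<and> g x \<le> t)"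

definition proper_closed_convex :: "nat \<Rightarrow> vec set \<Rightarrow> (vec \<Rightarrow> real) \<Rightarrow> bool" where
  "proper_closed_convex n D g \<longleftrightarrow> D \<noteq> {} \<and> convex_V n D \<and> convex_fun_on D g \<and> closed_fun n D g"

definition has_grad :: "nat \<Rightarrow> (vec \<Rightarrow> real) \<Rightarrow> vec \<Rightarrow> vec \<Rightarrow> bool" where
  "has_grad n f g x \<longleftrightarrow> g \<in> Vsp n \<and>
     (\<forall>e>0. \<exists>d>0. \<forall>h\<in>Vsp n. vnorm n h < d \<longrightarrow> \<bar>f (vadd x h) - f x - ip n g h\<bar> \<le> e * vnorm n h)"

definition grad_lip :: "nat \<Rightarrow> (vec \<Rightarrow> real) \<Rightarrow> real \<Rightarrow> bool" where
  "grad_lip n f L \<longleftrightarrow> (\<exists>G. (\<forall>x\<in>Vsp n. has_grad n f (G x) x) \<and>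
     (\<forall>x\<in>Vsp n. \<forall>y\<in>Vsp n. vnorm n (vsub (G x) (G y)) \<le> L * vnorm n (vsub x y)))"

definition smooth_const :: "nat \<Rightarrow> (vec \<Rightarrow> real) \<Rightarrow> real" where
  "smooth_const n f = Inf {L. L \<ge> 0 \<and> grad_lip n f L}"

text \<open>Fenchel conjugate: effective domain and values.\<close>
definition conj_dom :: "nat \<Rightarrow> (vec \<Rightarrow> real) \<Rightarrow> vec set" where
  "conj_dom n f = {\<pi>\<in>Vsp n. bdd_above ((\<lambda>x. ip n x \<pi> - f x) ` Vsp n)}"

definition conj :: "nat \<Rightarrow> (vec \<Rightarrow> real) \<Rightarrow> vec \<Rightarrow> real" where
  "conj n f \<pi> = (SUP x\<in>Vsp n. ip n x \<pi> - f x)"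

record problem =
  dim :: nat
  nw :: nat                       (* m, number of workers, indexed 0..m-1 *)
  fs :: "nat \<Rightarrow> vec \<Rightarrow> real"
  Xs :: "vec set"
  Ps :: "vec set"
  rdom :: "vec set"               (* effective domain of rho^* *)
  rho :: "vec \<Rightarrow> real"            (* rho^* on its domain *)
  udom :: "vec set"
  u :: "vec \<Rightarrow> real"

definition combo :: "problem \<Rightarrow> vec \<Rightarrow> vec \<Rightarrow> real" where
  "combo pr p = (\<lambda>x. \<Sum>i<nw pr. p i * fs pr i x)"

text \<open>Objective f(x) (finite on X \<inter> dom u).\<close>
definition obj :: "problem \<Rightarrow> vec \<Rightarrow> real" where
  "obj pr x = (SUP p\<in>Ps pr \<inter> rdom pr. combo pr p x - rho pr p) + u pr x"

definition smooth_problem :: "problem \<Rightarrow> bool" where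
  "smooth_problem pr \<longleftrightarrow> (let n = dim pr; m = nw pr in
     m \<ge> 1 \<and>
     closed_V n (Xs pr) \<and> convex_V n (Xs pr) \<and>
     Ps pr \<subseteq> {p\<in>Vsp m. (\<forall>i<m. 0 \<le> p i) \<and> (\<Sum>i<m. p i) = 1} \<and>
     closed_V m (Ps pr) \<and> convex_V m (Ps pr) \<and> Ps pr \<inter> rdom pr \<noteq> {} \<and>
     proper_closed_convex m (rdom pr) (rho pr) \<and>
     proper_closed_convex n (udom pr) (u pr) \<and>
     (\<forall>i<m. convex_fun_on (Vsp n) (fs pr i) \<and> (\<exists>L. grad_lip n (fs pr i) L)))"

definition agg_smooth :: "problem \<Rightarrow> real \<Rightarrow> bool" where
  "agg_smooth pr L \<longleftrightarrow> (\<forall>p\<in>Ps pr. smooth_const (dim pr) (combo pr p) \<le> L) \<and>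
     (\<exists>p\<in>Ps pr. smooth_const (dim pr) (combo pr p) = L)"

definition is_opt :: "problem \<Rightarrow> vec \<Rightarrow> bool" where
  "is_opt pr xs \<longleftrightarrow> xs \<in> Xs pr \<inter> udom pr \<and> (\<forall>x\<in>Xs pr \<inter> udom pr. obj pr xs \<le> obj pr x)"

definition eps_opt :: "problem \<Rightarrow> real \<Rightarrow> vec \<Rightarrow> bool" where
  "eps_opt pr \<epsilon> x \<longleftrightarrow> x \<in> Xs pr \<inter> udom pr \<and> (\<forall>xs. is_opt pr xs \<longrightarrow> obj pr x - obj pr xs \<le> \<epsilon>)"

section \<open>DPM algorithms (span-based memory model on the star network)\<close>

text \<open>State: (server memory, worker primal memories, worker dual memories).\<close>
type_synonym state = "vec set \<times> (nat \<Rightarrow> vec set) \<times> (nat \<Rightarrow> vec set)"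

definition init_state :: state where
  "init_state = ({vzero}, \<lambda>_. {vzero}, \<lambda>_. {vzero})"

text \<open>Worker oracle (A_i = I): argmax over Pi_i = dom f_i^* of <x,pi> - f_i^*(pi) - tau/2 ||pi - pib||^2.\<close>
definition worker_oracle :: "nat \<Rightarrow> (vec \<Rightarrow> real) \<Rightarrow> vec \<Rightarrow> vec \<Rightarrow> real \<Rightarrow> vec set" where
  "worker_oracle n f xb pib tau = {\<pi>'\<in>conj_dom n f. \<forall>\<pi>\<in>conj_dom n f.
      ip n xb \<pi> - conj n f \<pi> - tau / 2 * (vnorm n (vsub \<pi> pib))\<^sup>2
        \<le> ip n xb \<pi>' - conj n f \<pi>' - tau / 2 * (vnorm n (vsub \<pi>' pib))\<^sup>2}"

definition prox_set :: "problem \<Rightarrow> real \<Rightarrow> vec \<Rightarrow> vec set" where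
  "prox_set pr eta xb = {x'\<in>Xs pr \<inter> udom pr. \<forall>x\<in>Xs pr \<inter> udom pr.
      u pr x' + eta / 2 * (vnorm (dim pr) (vsub x' xb))\<^sup>2 \<le> u pr x + eta / 2 * (vnorm (dim pr) (vsub x xb))\<^sup>2}"

inductive local_step :: "problem \<Rightarrow> state \<Rightarrow> state \<Rightarrow> bool" for pr where
  worker: "\<lbrakk> i < nw pr; xb \<in> vspan (Mp i); pib \<in> vspan (Md i); tau \<ge> 0;
             \<pi>' \<in> worker_oracle (dim pr) (fs pr i) xb pib tau \<rbrakk>
           \<Longrightarrow> local_step pr (Ms, Mp, Md) (Ms, Mp(i := Mp i \<union> {\<pi>', pib}), Md(i := Md i \<union> {\<pi>', xb}))"
| server: "\<lbrakk> xb \<in> vspan Ms; eta > 0; x' \<in> prox_set pr eta xb \<rbrakk>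
           \<Longrightarrow> local_step pr (Ms, Mp, Md) (Ms \<union> {x'}, Mp, Md)"

definition comm_round :: "problem \<Rightarrow> state \<Rightarrow> state \<Rightarrow> bool" where
  "comm_round pr S S' \<longleftrightarrow> (case S of (Ms, Mp, Md) \<Rightarrow>
     (\<exists>sv rv. (\<forall>i<nw pr. sv i \<in> vspan (Mp i) \<and> rv i \<in> vspan Ms) \<and>
        S' = (Ms \<union> sv ` {..<nw pr}, (\<lambda>i. if i < nw pr then Mp i \<union> {rv i} else Mp i), Md)))"

fun reach :: "problem \<Rightarrow> nat \<Rightarrow> state \<Rightarrow> bool" where
  "reach pr 0 S = (local_step pr)\<^sup>*\<^sup>* init_state S"
| "reach pr (Suc t) S = (\<exists>S1 S2. reach pr t S1 \<and> comm_round pr S1 S2 \<and> (local_step pr)\<^sup>*\<^sup>* S2 S)"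

definition outputs :: "problem \<Rightarrow> state \<Rightarrow> vec set" where
  "outputs pr S = (case S of (Ms, Mp, Md) \<Rightarrow> vspan (Ms \<union> (\<Union>i<nw pr. Mp i)))"

end

theory Submission
  imports Defs "HOL-Analysis.L2_Norm"
begin



lemma vnorm_L2: "vnorm n x = L2_set x {..<n}"
  by (simp add: vnorm_def ip_def L2_set_def power2_eq_square)

lemma vnorm_nonneg: "0 \<le> vnorm n x" by (simp add: vnorm_L2)

lemma vnorm_sq: "(vnorm n x)\<^sup>2 = (\<Sum>i<n. (x i)\<^sup>2)"
  by (simp add: vnorm_L2 L2_set_def sum_nonneg)

lemma ip_self: "ip n x x = (vnorm n x)\<^sup>2"
  unfolding vnorm_sq by (simp add: ip_def power2_eq_square)

definition trm :: "real \<Rightarrow> vec \<Rightarrow> nat \<Rightarrow> real" where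
  "trm a x i = (if i = 0 then a else x (i - 1)) - x i"

definition Q :: "nat \<Rightarrow> real \<Rightarrow> (nat \<Rightarrow> real) \<Rightarrow> vec \<Rightarrow> real" where
  "Q k a w x = (\<Sum>i<k. w i * (trm a x i)\<^sup>2)"

definition dlt :: "nat \<Rightarrow> vec" where "dlt m = (\<lambda>j. if j = m then 1 else 0)"

definition QG :: "nat \<Rightarrow> real \<Rightarrow> (nat \<Rightarrow> real) \<Rightarrow> vec \<Rightarrow> vec" where
  "QG k a w x = (\<lambda>m. 2 * (\<Sum>i<k. w i * trm a x i * trm 0 (dlt m) i))"

lemma term_add: "trm a (vadd x h) i = trm a x i + trm 0 h i"
  by (simp add: trm_def vadd_def)

lemma sum_term_dlt:
  assumes "i < n"
  shows "(\<Sum>m<n. trm 0 (dlt m) i * h m) = trm 0 h i"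
proof -
  have e: "\<And>m. trm 0 (dlt m) i * h m = (if i \<noteq> 0 \<and> m = i - 1 then h m else 0) - (if m = i then h m else 0)"
    by (auto simp: trm_def dlt_def)
  have s1: "(\<Sum>m<n. if m = i then h m else 0) = h i"
    using assms by (simp add: sum.delta)
  have s2: "(\<Sum>m<n. (if i \<noteq> 0 \<and> m = i - 1 then h m else 0)) = (if i = 0 then 0 else h (i - 1))"
  proof (cases "i = 0")
    case True then show ?thesis by simp
  next
    case False
    then have "i - 1 < n" using assms by linarith
    then show ?thesis using False by (simp add: sum.delta)
  qed
  show ?thesis unfolding e sum_subtractf s1 s2 by (simp add: trm_def)
qed

lemma ip_QG:
  assumes "k \<le> n"
  shows "ip n (QG k a w x) h = 2 * (\<Sum>i<k. w i * trm a x i * trm 0 h i)"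
proof -
  have "ip n (QG k a w x) h = (\<Sum>m<n. 2 * (\<Sum>i<k. w i * trm a x i * (trm 0 (dlt m) i * h m)))"
    unfolding ip_def QG_def by (simp only: sum_distrib_right mult.assoc)
  also have "\<dots> = 2 * (\<Sum>m<n. \<Sum>i<k. w i * trm a x i * (trm 0 (dlt m) i * h m))"
    by (simp only: sum_distrib_left)
  also have "\<dots> = 2 * (\<Sum>i<k. \<Sum>m<n. w i * trm a x i * (trm 0 (dlt m) i * h m))"
    by (rule arg_cong[where f="\<lambda>s. 2 * s"], rule sum.swap)
  also have "\<dots> = 2 * (\<Sum>i<k. w i * trm a x i * (\<Sum>m<n. trm 0 (dlt m) i * h m))"
    by (simp only: sum_distrib_left mult.assoc)
  also have "\<dots> = 2 * (\<Sum>i<k. w i * trm a x i * trm 0 h i)"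
    using assms by (intro arg_cong[where f="\<lambda>s. 2 * s"] sum.cong refl) (simp add: sum_term_dlt)
  finally show ?thesis .
qed

lemma trm_dlt_far: assumes "i < k" "k \<le> m" shows "trm 0 (dlt m) i = 0"
proof -
  have "i \<noteq> m" "i - 1 \<noteq> m" using assms by linarith+
  then show ?thesis unfolding trm_def dlt_def by simp
qed

lemma QG_Vsp: assumes "k \<le> n" shows "QG k a w x \<in> Vsp n"
  using assms unfolding Vsp_def QG_def by (auto simp: trm_dlt_far intro!: sum.neutral)

lemma Q_expand: "Q k a w (vadd x h) - Q k a w x - 2 * (\<Sum>i<k. w i * trm a x i * trm 0 h i)
   = Q k 0 w h"
proof -
  have "\<And>i. w i * (trm a (vadd x h) i)\<^sup>2 - w i * (trm a x i)\<^sup>2 - 2 * (w i * trm a x i * trm 0 h i)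
      = w i * (trm 0 h i)\<^sup>2"
    by (simp add: term_add power2_eq_square algebra_simps)
  then show ?thesis
    unfolding Q_def sum_distrib_left sum_subtractf[symmetric] by simp
qed

lemma Q_nonneg: "(\<And>i. 0 \<le> w i) \<Longrightarrow> 0 \<le> Q k a w x"
  unfolding Q_def by (intro sum_nonneg mult_nonneg_nonneg) auto

lemma Q_has_grad:
  assumes kn: "k \<le> n" and w: "\<And>i. 0 \<le> w i" and M: "0 \<le> M"
    and bnd: "\<And>h. Q k 0 w h \<le> M * (vnorm n h)\<^sup>2"
  shows "has_grad n (Q k a w) (QG k a w x) x"
  unfolding has_grad_def
proof (intro conjI allI impI)
  show "QG k a w x \<in> Vsp n" using kn by (rule QG_Vsp)
  fix e :: real assume e: "e > 0"
  show "\<exists>d>0. \<forall>h\<in>Vsp n. vnorm n h < d \<longrightarrow>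
      \<bar>Q k a w (vadd x h) - Q k a w x - ip n (QG k a w x) h\<bar> \<le> e * vnorm n h"
  proof (intro exI[of _ "e / (M + 1)"] conjI ballI impI)
    show "0 < e / (M + 1)" using e M by simp
    fix h assume "h \<in> Vsp n" and hd: "vnorm n h < e / (M + 1)"
    have eq: "Q k a w (vadd x h) - Q k a w x - ip n (QG k a w x) h = Q k 0 w h"
      using Q_expand[of k a w x h] ip_QG[OF kn] by simp
    have nn: "0 \<le> vnorm n h" by (rule vnorm_nonneg)
    have "Q k 0 w h \<le> M * (vnorm n h * vnorm n h)" using bnd[of h] by (simp add: power2_eq_square)
    also have "\<dots> \<le> M * ((e / (M + 1)) * vnorm n h)"
      using hd nn M by (intro mult_left_mono mult_right_mono) auto
    also have "\<dots> \<le> e * vnorm n h"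
    proof -
      have "M * (e / (M + 1)) \<le> e" using M e by (simp add: field_simps)
      then show ?thesis using nn by (metis mult.assoc mult_right_mono)
    qed
    finally show "\<bar>Q k a w (vadd x h) - Q k a w x - ip n (QG k a w x) h\<bar> \<le> e * vnorm n h"
      unfolding eq using Q_nonneg[of w k 0 h, OF w] by simp
  qed
qed

lemma QG_diff: "vsub (QG k a w x) (QG k a w y) = QG k 0 w (vsub x y)"
proof -
  have t: "\<And>i. trm a x i - trm a y i = trm 0 (\<lambda>i. x i - y i) i" by (simp add: trm_def)
  show ?thesis unfolding vsub_def QG_def
    by (auto simp: right_diff_distrib[symmetric] sum_subtractf[symmetric] left_diff_distrib[symmetric] t
        simp flip: mult.assoc intro!: ext sum.cong)
qed

lemma weighted_cs:
  assumes w: "\<And>i. 0 \<le> w i"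
  shows "(\<Sum>i<k. w i * f i * g i) \<le> sqrt (\<Sum>i<k. w i * (f i)\<^sup>2) * sqrt (\<Sum>i<k. w i * (g i)\<^sup>2)"
proof -
  have "(\<Sum>i<k. w i * f i * g i) \<le> (\<Sum>i<k. \<bar>sqrt (w i) * f i\<bar> * \<bar>sqrt (w i) * g i\<bar>)"
  proof (rule sum_mono)
    fix i
    have "w i * f i * g i = (sqrt (w i) * f i) * (sqrt (w i) * g i)"
      using w[of i] by (simp add: algebra_simps flip: real_sqrt_mult) 
    then show "w i * f i * g i \<le> \<bar>sqrt (w i) * f i\<bar> * \<bar>sqrt (w i) * g i\<bar>"
      by (metis abs_ge_self abs_mult)
  qed
  also have "\<dots> \<le> L2_set (\<lambda>i. sqrt (w i) * f i) {..<k} * L2_set (\<lambda>i. sqrt (w i) * g i) {..<k}"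
    by (rule L2_set_mult_ineq)
  also have "\<dots> = sqrt (\<Sum>i<k. w i * (f i)\<^sup>2) * sqrt (\<Sum>i<k. w i * (g i)\<^sup>2)"
    unfolding L2_set_def using w by (simp add: power_mult_distrib)
  finally show ?thesis .
qed

lemma QG0_bound:
  assumes kn: "k \<le> n" and w: "\<And>i. 0 \<le> w i" and M: "0 \<le> M"
    and bnd: "\<And>h. Q k 0 w h \<le> M * (vnorm n h)\<^sup>2"
  shows "vnorm n (QG k 0 w z) \<le> 2 * M * vnorm n z"
proof -
  define g where "g = QG k 0 w z"
  have "(vnorm n g)\<^sup>2 = 2 * (\<Sum>i<k. w i * trm 0 z i * trm 0 g i)"
    using ip_QG[OF kn, of 0 w z g] unfolding g_def ip_self by simp
  also have "\<dots> \<le> 2 * (sqrt (Q k 0 w z) * sqrt (Q k 0 w g))"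
    unfolding Q_def using weighted_cs[OF w] by simp
  also have "\<dots> \<le> 2 * (sqrt (M * (vnorm n z)\<^sup>2) * sqrt (M * (vnorm n g)\<^sup>2))"
    using bnd Q_nonneg[OF w] M by (intro mult_left_mono mult_mono real_sqrt_le_mono) auto
  also have "\<dots> = 2 * M * vnorm n z * vnorm n g"
    using M by (simp add: real_sqrt_mult vnorm_nonneg)
  finally have "vnorm n g * vnorm n g \<le> (2 * M * vnorm n z) * vnorm n g"
    by (simp add: power2_eq_square)
  then show ?thesis unfolding g_def[symmetric]
    using vnorm_nonneg[of n g] by (cases "vnorm n g = 0") (auto simp: vnorm_nonneg M)
qed

lemma Q_grad_lip:
  assumes kn: "k \<le> n" and w: "\<And>i. 0 \<le> w i" and M: "0 \<le> M"
    and bnd: "\<And>h. Q k 0 w h \<le> M * (vnorm n h)\<^sup>2"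
  shows "grad_lip n (Q k a w) (2 * M)"
  unfolding grad_lip_def
  using Q_has_grad[OF assms] QG0_bound[OF assms] by (auto simp: QG_diff intro!: exI[of _ "QG k a w"])

lemma sq_convex: "0 \<le> (t::real) \<Longrightarrow> t \<le> 1 \<Longrightarrow> (t * r + (1 - t) * s)\<^sup>2 \<le> t * r\<^sup>2 + (1 - t) * s\<^sup>2"
proof -
  assume "0 \<le> t" "t \<le> 1"
  then have "0 \<le> t * (1 - t) * (r - s)\<^sup>2" by (intro mult_nonneg_nonneg) auto
  then show ?thesis by (simp add: power2_eq_square algebra_simps)
qed

lemma Q_convex:
  assumes w: "\<And>i. 0 \<le> w i"
  shows "convex_fun_on D (Q k a w)"
  unfolding convex_fun_on_def
proof (intro ballI allI impI)
  fix x y and t :: real assume x: "x \<in> D" and y: "y \<in> D" and t: "0 \<le> t \<and> t \<le> 1"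
  have tr: "\<And>i. trm a (\<lambda>i. t * x i + (1 - t) * y i) i = t * trm a x i + (1 - t) * trm a y i"
    by (simp add: trm_def algebra_simps)
  have "Q k a w (\<lambda>i. t * x i + (1 - t) * y i) \<le> (\<Sum>i<k. t * (w i * (trm a x i)\<^sup>2) + (1 - t) * (w i * (trm a y i)\<^sup>2))"
    unfolding Q_def tr
  proof (rule sum_mono)
    fix i
    have "w i * (t * trm a x i + (1 - t) * trm a y i)\<^sup>2 \<le> w i * (t * (trm a x i)\<^sup>2 + (1 - t) * (trm a y i)\<^sup>2)"
      using t w[of i] sq_convex by (intro mult_left_mono) auto
    then show "w i * (t * trm a x i + (1 - t) * trm a y i)\<^sup>2 \<le> t * (w i * (trm a x i)\<^sup>2) + (1 - t) * (w i * (trm a y i)\<^sup>2)"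
      by (simp add: algebra_simps)
  qed
  also have "\<dots> = t * Q k a w x + (1 - t) * Q k a w y"
    unfolding Q_def by (simp add: sum.distrib sum_distrib_left)
  finally show "Q k a w (\<lambda>i. t * x i + (1 - t) * y i) \<le> t * Q k a w x + (1 - t) * Q k a w y" .
qed



lemma ip_comb: "ip n (\<lambda>i. \<alpha> * g i + \<beta> * g' i) h = \<alpha> * ip n g h + \<beta> * ip n g' h"
  by (simp add: ip_def sum.distrib sum_distrib_left algebra_simps)

lemma has_grad_comb:
  assumes g: "has_grad n f g x" and g': "has_grad n f' g' x"
  shows "has_grad n (\<lambda>y. \<alpha> * f y + \<beta> * f' y) (\<lambda>i. \<alpha> * g i + \<beta> * g' i) x"
  unfolding has_grad_def
proof (intro conjI allI impI)
  show "(\<lambda>i. \<alpha> * g i + \<beta> * g' i) \<in> Vsp n"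
    using g g' by (auto simp: has_grad_def Vsp_def)
  fix e :: real assume e: "e > 0"
  define e' where "e' = e / (\<bar>\<alpha>\<bar> + \<bar>\<beta>\<bar> + 1)"
  have e': "e' > 0" using e by (simp add: e'_def add_nonneg_pos)
  obtain d1 where d1: "d1 > 0" "\<forall>h\<in>Vsp n. vnorm n h < d1 \<longrightarrow> \<bar>f (vadd x h) - f x - ip n g h\<bar> \<le> e' * vnorm n h"
    using g e' unfolding has_grad_def by blast
  obtain d2 where d2: "d2 > 0" "\<forall>h\<in>Vsp n. vnorm n h < d2 \<longrightarrow> \<bar>f' (vadd x h) - f' x - ip n g' h\<bar> \<le> e' * vnorm n h"
    using g' e' unfolding has_grad_def by blast
  show "\<exists>d>0. \<forall>h\<in>Vsp n. vnorm n h < d \<longrightarrow>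
      \<bar>\<alpha> * f (vadd x h) + \<beta> * f' (vadd x h) - (\<alpha> * f x + \<beta> * f' x) - ip n (\<lambda>i. \<alpha> * g i + \<beta> * g' i) h\<bar> \<le> e * vnorm n h"
  proof (intro exI[of _ "min d1 d2"] conjI ballI impI)
    show "0 < min d1 d2" using d1 d2 by simp
    fix h assume h: "h \<in> Vsp n" "vnorm n h < min d1 d2"
    define A where "A = f (vadd x h) - f x - ip n g h"
    define B where "B = f' (vadd x h) - f' x - ip n g' h"
    have A: "\<bar>A\<bar> \<le> e' * vnorm n h" using d1 h unfolding A_def by auto
    have B: "\<bar>B\<bar> \<le> e' * vnorm n h" using d2 h unfolding B_def by auto
    have eq: "\<alpha> * f (vadd x h) + \<beta> * f' (vadd x h) - (\<alpha> * f x + \<beta> * f' x) - ip n (\<lambda>i. \<alpha> * g i + \<beta> * g' i) h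
       = \<alpha> * A + \<beta> * B" unfolding A_def B_def ip_comb by (simp add: algebra_simps)
    have "\<bar>\<alpha> * A + \<beta> * B\<bar> \<le> \<bar>\<alpha>\<bar> * \<bar>A\<bar> + \<bar>\<beta>\<bar> * \<bar>B\<bar>"
      using abs_triangle_ineq[of "\<alpha> * A" "\<beta> * B"] by (simp add: abs_mult)
    also have "\<dots> \<le> \<bar>\<alpha>\<bar> * (e' * vnorm n h) + \<bar>\<beta>\<bar> * (e' * vnorm n h)"
      using A B by (intro add_mono mult_left_mono) auto
    also have "\<dots> = (\<bar>\<alpha>\<bar> + \<bar>\<beta>\<bar>) * e' * vnorm n h" by (simp add: algebra_simps)
    also have "\<dots> \<le> e * vnorm n h"
    proof (intro mult_right_mono vnorm_nonneg)
      have "(\<bar>\<alpha>\<bar> + \<bar>\<beta>\<bar>) * e' \<le> (\<bar>\<alpha>\<bar> + \<bar>\<beta>\<bar> + 1) * e'" using e' by simp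
      also have "\<dots> = e" unfolding e'_def by (simp add: add_nonneg_pos)
      finally show "(\<bar>\<alpha>\<bar> + \<bar>\<beta>\<bar>) * e' \<le> e" .
    qed
    finally show "\<bar>\<alpha> * f (vadd x h) + \<beta> * f' (vadd x h) - (\<alpha> * f x + \<beta> * f' x) - ip n (\<lambda>i. \<alpha> * g i + \<beta> * g' i) h\<bar> \<le> e * vnorm n h"
      unfolding eq .
  qed
qed

lemma vnorm_add: "vnorm n (\<lambda>i. x i + y i) \<le> vnorm n x + vnorm n y"
  unfolding vnorm_L2 by (rule L2_set_triangle_ineq)

lemma vnorm_scale: "vnorm n (\<lambda>i. c * x i) = \<bar>c\<bar> * vnorm n x"
  unfolding vnorm_L2 L2_set_def by (simp add: power_mult_distrib real_sqrt_mult sum_distrib_left[symmetric])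

lemma grad_lip_comb:
  assumes f: "grad_lip n f L1" and f': "grad_lip n f' L2" and \<alpha>: "0 \<le> \<alpha>" and \<beta>: "0 \<le> \<beta>"
  shows "grad_lip n (\<lambda>y. \<alpha> * f y + \<beta> * f' y) (\<alpha> * L1 + \<beta> * L2)"
proof -
  obtain G where G: "\<forall>x\<in>Vsp n. has_grad n f (G x) x"
     "\<forall>x\<in>Vsp n. \<forall>y\<in>Vsp n. vnorm n (vsub (G x) (G y)) \<le> L1 * vnorm n (vsub x y)"
    using f unfolding grad_lip_def by blast
  obtain G' where G': "\<forall>x\<in>Vsp n. has_grad n f' (G' x) x"
     "\<forall>x\<in>Vsp n. \<forall>y\<in>Vsp n. vnorm n (vsub (G' x) (G' y)) \<le> L2 * vnorm n (vsub x y)"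
    using f' unfolding grad_lip_def by blast
  show ?thesis unfolding grad_lip_def
  proof (intro exI[of _ "\<lambda>x i. \<alpha> * G x i + \<beta> * G' x i"] conjI ballI)
    fix x assume "x \<in> Vsp n"
    then show "has_grad n (\<lambda>y. \<alpha> * f y + \<beta> * f' y) (\<lambda>i. \<alpha> * G x i + \<beta> * G' x i) x"
      using G G' by (intro has_grad_comb) auto
  next
    fix x y assume x: "x \<in> Vsp n" and y: "y \<in> Vsp n"
    have eq: "vsub (\<lambda>i. \<alpha> * G x i + \<beta> * G' x i) (\<lambda>i. \<alpha> * G y i + \<beta> * G' y i)
        = (\<lambda>i. (\<lambda>i. \<alpha> * vsub (G x) (G y) i) i + (\<lambda>i. \<beta> * vsub (G' x) (G' y) i) i)"
      by (simp add: vsub_def algebra_simps)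
    have "vnorm n (vsub (\<lambda>i. \<alpha> * G x i + \<beta> * G' x i) (\<lambda>i. \<alpha> * G y i + \<beta> * G' y i))
       \<le> \<alpha> * vnorm n (vsub (G x) (G y)) + \<beta> * vnorm n (vsub (G' x) (G' y))"
      unfolding eq using vnorm_add[of n "\<lambda>i. \<alpha> * vsub (G x) (G y) i" "\<lambda>i. \<beta> * vsub (G' x) (G' y) i"]
        vnorm_scale[of n \<alpha>] vnorm_scale[of n \<beta>] \<alpha> \<beta> by simp
    also have "\<dots> \<le> \<alpha> * (L1 * vnorm n (vsub x y)) + \<beta> * (L2 * vnorm n (vsub x y))"
      using G G' x y \<alpha> \<beta> by (intro add_mono mult_left_mono) auto
    finally show "vnorm n (vsub (\<lambda>i. \<alpha> * G x i + \<beta> * G' x i) (\<lambda>i. \<alpha> * G y i + \<beta> * G' y i))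
       \<le> (\<alpha> * L1 + \<beta> * L2) * vnorm n (vsub x y)" by (simp add: algebra_simps)
  qed
qed

lemma vnorm_zero_iff: "vnorm n v = 0 \<longleftrightarrow> (\<forall>i<n. v i = 0)"
  unfolding vnorm_L2 by (auto simp: L2_set_eq_0_iff)

lemma has_grad_unique:
  assumes g: "has_grad n f g x" and g': "has_grad n f g' x"
  shows "\<forall>i<n. g i = g' i"
proof (rule ccontr)
  assume nt: "\<not> (\<forall>i<n. g i = g' i)"
  define v where "v = vsub g g'"
  have vpos: "vnorm n v > 0"
    using nt vnorm_zero_iff[of n v] vnorm_nonneg[of n v] by (auto simp: v_def vsub_def)
  define e where "e = vnorm n v / 4"
  have e: "e > 0" using vpos by (simp add: e_def)
  obtain d1 where d1: "d1 > 0" "\<forall>h\<in>Vsp n. vnorm n h < d1 \<longrightarrow> \<bar>f (vadd x h) - f x - ip n g h\<bar> \<le> e * vnorm n h"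
    using g e unfolding has_grad_def by blast
  obtain d2 where d2: "d2 > 0" "\<forall>h\<in>Vsp n. vnorm n h < d2 \<longrightarrow> \<bar>f (vadd x h) - f x - ip n g' h\<bar> \<le> e * vnorm n h"
    using g' e unfolding has_grad_def by blast
  define s where "s = min d1 d2 / (2 * vnorm n v)"
  have s: "s > 0" using d1 d2 vpos by (simp add: s_def)
  define h where "h = (\<lambda>i. s * v i)"
  have vV: "v \<in> Vsp n" using g g' by (auto simp: has_grad_def Vsp_def v_def vsub_def)
  have hV: "h \<in> Vsp n" using vV by (auto simp: Vsp_def h_def)
  have hn: "vnorm n h = s * vnorm n v" using s by (simp add: h_def vnorm_scale)
  have "vnorm n h = min d1 d2 / 2" using vpos unfolding hn s_def by simp
  then have hd1: "vnorm n h < d1" and hd2: "vnorm n h < d2" using d1 d2 by linarith+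
  have A: "\<bar>f (vadd x h) - f x - ip n g h\<bar> \<le> e * vnorm n h" using d1 hV hd1 by auto
  have B: "\<bar>f (vadd x h) - f x - ip n g' h\<bar> \<le> e * vnorm n h" using d2 hV hd2 by auto
  have eqs: "ip n g h - ip n g' h = s * (vnorm n v)\<^sup>2"
    unfolding ip_self[symmetric] by (simp add: ip_def h_def v_def vsub_def sum_subtractf[symmetric] sum_distrib_left algebra_simps)
  have "ip n g h - ip n g' h \<le> 2 * e * vnorm n h" using A B by linarith
  then have "s * (vnorm n v)\<^sup>2 \<le> 2 * (vnorm n v / 4) * (s * vnorm n v)" unfolding e_def hn eqs by simp
  then have "s * (vnorm n v)\<^sup>2 \<le> (s * (vnorm n v)\<^sup>2) / 2" by (simp add: power2_eq_square algebra_simps)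
  moreover have "s * (vnorm n v)\<^sup>2 > 0" using s vpos by simp
  ultimately show False by linarith
qed



definition rin :: "nat \<Rightarrow> vec \<Rightarrow> vec" where "rin E x = (\<lambda>i. if i < E then x i else 0)"
definition rout :: "nat \<Rightarrow> vec \<Rightarrow> vec" where "rout E x = (\<lambda>i. if i < E then 0 else x i)"

lemma oracle_support:
  assumes H1: "\<And>x. f x = f (rin E x) + f (rout E x) - f vzero"
    and H2: "\<And>y s. f (\<lambda>i. s * rout E y i) - f vzero = s\<^sup>2 * (f (rout E y) - f vzero)"
    and H3: "\<And>y. f vzero \<le> f (rout E y)"
    and xb: "xb \<in> Vsp E" and pib: "pib \<in> Vsp E" and tau: "0 \<le> \<tau>"
    and pi: "\<pi>' \<in> worker_oracle n f xb pib \<tau>"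
  shows "\<pi>' \<in> Vsp E"
proof (rule ccontr)
  assume nE: "\<pi>' \<notin> Vsp E"
  have dom: "\<pi>' \<in> conj_dom n f" and opt: "\<And>\<pi>. \<pi> \<in> conj_dom n f \<Longrightarrow>
      ip n xb \<pi> - conj n f \<pi> - \<tau> / 2 * (vnorm n (vsub \<pi> pib))\<^sup>2
        \<le> ip n xb \<pi>' - conj n f \<pi>' - \<tau> / 2 * (vnorm n (vsub \<pi>' pib))\<^sup>2"
    using pi unfolding worker_oracle_def by auto
  have piV: "\<pi>' \<in> Vsp n" and bdd: "bdd_above ((\<lambda>x. ip n x \<pi>' - f x) ` Vsp n)"
    using dom unfolding conj_dom_def by auto
  obtain j where j: "j \<ge> E" "\<pi>' j \<noteq> 0" using nE unfolding Vsp_def by auto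
  have jn: "j < n"
  proof (rule ccontr)
    assume "\<not> j < n"
    then have "\<pi>' j = 0" using piV unfolding Vsp_def by simp
    then show False using j by simp
  qed
  define v where "v = rout E \<pi>'"
  define p2 where "p2 = rin E \<pi>'"
  define vv where "vv = ip n v v"
  have vv_eq: "vv = (\<Sum>i<n. (v i)\<^sup>2)" by (simp add: vv_def ip_def power2_eq_square)
  have vvpos: "vv > 0"
  proof -
    have "(v j)\<^sup>2 \<le> (\<Sum>i<n. (v i)\<^sup>2)" using jn by (intro member_le_sum) auto
    moreover have "(v j)\<^sup>2 > 0" using j by (simp add: v_def rout_def)
    ultimately show ?thesis unfolding vv_eq by linarith
  qed
  have vV: "v \<in> Vsp n" using piV by (auto simp: Vsp_def v_def rout_def)
  have ipv: "ip n v \<pi>' = vv" unfolding vv_def ip_def by (intro sum.cong) (auto simp: v_def rout_def)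
  obtain B where B: "\<And>x. x \<in> Vsp n \<Longrightarrow> ip n x \<pi>' - f x \<le> B"
    using bdd unfolding bdd_above_def by auto
  have rinV: "\<And>x. x \<in> Vsp n \<Longrightarrow> rin E x \<in> Vsp n" by (auto simp: Vsp_def rin_def)
  have ip_rin: "\<And>x. ip n x p2 = ip n (rin E x) \<pi>'"
    unfolding ip_def p2_def rin_def by (intro sum.cong) auto
  have f_ge: "\<And>x. f (rin E x) \<le> f x"
  proof -
    fix x show "f (rin E x) \<le> f x" using H1[of x] H3[of x] by linarith
  qed
  have key: "\<And>x. ip n x p2 - f x \<le> ip n (rin E x) \<pi>' - f (rin E x)"
    using ip_rin f_ge by (simp add: algebra_simps)
  have p2V: "p2 \<in> Vsp n" using piV by (auto simp: Vsp_def p2_def rin_def)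
  have p2dom: "p2 \<in> conj_dom n f"
    unfolding conj_dom_def bdd_above_def
  proof (intro CollectI conjI p2V exI[of _ B] ballI)
    fix r assume "r \<in> (\<lambda>x. ip n x p2 - f x) ` Vsp n"
    then obtain x where x: "x \<in> Vsp n" "r = ip n x p2 - f x" by auto
    show "r \<le> B" using key[of x] B[OF rinV[OF x(1)]] x(2) by linarith
  qed
  define C where "C = f v - f vzero"
  have C: "0 \<le> C" using H3[of \<pi>'] by (simp add: C_def v_def)
  define s where "s = vv / (2 * (C + 1))"
  have s: "s > 0" using vvpos C by (simp add: s_def)
  define g where "g = s * vv - s\<^sup>2 * C"
  have gpos: "g > 0"
  proof -
    have "s * C \<le> vv / 2" using C vvpos by (simp add: s_def field_simps)
    then have "s * (s * C) \<le> s * (vv / 2)" using s by (intro mult_left_mono) auto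
    then have "g \<ge> s * vv / 2" unfolding g_def by (simp add: power2_eq_square algebra_simps)
    moreover have "s * vv / 2 > 0" using s vvpos by simp
    ultimately show ?thesis by linarith
  qed
  have Vne: "Vsp n \<noteq> {}" using vV by auto
  have conj_le: "conj n f p2 \<le> conj n f \<pi>' - g"
    unfolding conj_def[of n f p2]
  proof (rule cSUP_least[OF Vne])
    fix x assume x: "x \<in> Vsp n"
    define z where "z = (\<lambda>i. rin E x i + s * v i)"
    have zV: "z \<in> Vsp n" using x vV by (auto simp: Vsp_def z_def rin_def)
    have rinz: "rin E z = rin E x" by (rule ext) (simp add: z_def rin_def v_def rout_def)
    have routz: "rout E z = (\<lambda>i. s * rout E \<pi>' i)" by (rule ext) (simp add: z_def rin_def v_def rout_def)
    have rr: "rout E \<pi>' = rout E (rout E \<pi>')" by (auto simp: rout_def)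
    have fz: "f z = f (rin E x) + s\<^sup>2 * C"
      using H1[of z] H2[of s "\<pi>'"] unfolding rinz routz C_def v_def by simp
    have ipz: "ip n z \<pi>' = ip n (rin E x) \<pi>' + s * vv"
      unfolding ipv[symmetric] ip_def z_def by (simp add: sum.distrib sum_distrib_left distrib_right mult.assoc)
    have "ip n z \<pi>' - f z \<le> conj n f \<pi>'"
      unfolding conj_def using bdd zV by (rule cSUP_upper2) simp
    then show "ip n x p2 - f x \<le> conj n f \<pi>' - g"
      using key[of x] unfolding fz ipz g_def by linarith
  qed
  have ipxb: "ip n xb p2 = ip n xb \<pi>'"
    unfolding ip_def p2_def rin_def using xb by (intro sum.cong) (auto simp: Vsp_def)
  have nrm: "(vnorm n (vsub p2 pib))\<^sup>2 \<le> (vnorm n (vsub \<pi>' pib))\<^sup>2"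
    unfolding vnorm_sq
  proof (rule sum_mono)
    fix i
    show "(vsub p2 pib i)\<^sup>2 \<le> (vsub \<pi>' pib i)\<^sup>2"
      using pib by (cases "i < E") (auto simp: vsub_def p2_def rin_def Vsp_def)
  qed
  have "\<tau> / 2 * (vnorm n (vsub p2 pib))\<^sup>2 \<le> \<tau> / 2 * (vnorm n (vsub \<pi>' pib))\<^sup>2"
    using tau nrm by (intro mult_left_mono) auto
  then have "ip n xb p2 - conj n f p2 - \<tau> / 2 * (vnorm n (vsub p2 pib))\<^sup>2
      > ip n xb \<pi>' - conj n f \<pi>' - \<tau> / 2 * (vnorm n (vsub \<pi>' pib))\<^sup>2"
    using conj_le gpos ipxb by linarith
  with opt[OF p2dom] show False by linarith
qed



lemma trm0_sq_bound:
  assumes kn: "k \<le> n"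
  shows "(\<Sum>i<k. (trm 0 h i)\<^sup>2) \<le> 4 * (vnorm n h)\<^sup>2"
proof -
  have p: "\<And>i. (trm 0 h i)\<^sup>2 \<le> 2 * (if i = 0 then 0 else h (i - 1))\<^sup>2 + 2 * (h i)\<^sup>2"
  proof -
    fix i
    have "0 \<le> ((if i = 0 then 0 else h (i - 1)) + h i)\<^sup>2" by simp
    then show "(trm 0 h i)\<^sup>2 \<le> 2 * (if i = 0 then 0 else h (i - 1))\<^sup>2 + 2 * (h i)\<^sup>2"
      unfolding trm_def by (simp add: power2_eq_square algebra_simps)
  qed
  have s1: "(\<Sum>i<k. (if i = 0 then 0 else h (i - 1))\<^sup>2) \<le> (\<Sum>i<n. (h i)\<^sup>2)"
  proof (cases k)
    case 0 then show ?thesis by (simp add: sum_nonneg)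
  next
    case (Suc k')
    have "(\<Sum>i<k. (if i = 0 then 0 else h (i - 1))\<^sup>2) = (\<Sum>i<k'. (h i)\<^sup>2)"
      unfolding Suc sum.lessThan_Suc_shift by simp
    also have "\<dots> \<le> (\<Sum>i<n. (h i)\<^sup>2)" using kn Suc by (intro sum_mono2) auto
    finally show ?thesis .
  qed
  have s2: "(\<Sum>i<k. (h i)\<^sup>2) \<le> (\<Sum>i<n. (h i)\<^sup>2)" using kn by (intro sum_mono2) auto
  have "(\<Sum>i<k. (trm 0 h i)\<^sup>2) \<le> (\<Sum>i<k. 2 * (if i = 0 then 0 else h (i - 1))\<^sup>2 + 2 * (h i)\<^sup>2)"
    by (rule sum_mono) (rule p)
  also have "\<dots> = 2 * (\<Sum>i<k. (if i = 0 then 0 else h (i - 1))\<^sup>2) + 2 * (\<Sum>i<k. (h i)\<^sup>2)"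
    by (simp add: sum.distrib sum_distrib_left)
  also have "\<dots> \<le> 4 * (vnorm n h)\<^sup>2" unfolding vnorm_sq using s1 s2 by linarith
  finally show ?thesis .
qed

lemma Q_bound_W:
  assumes kn: "k \<le> n" and w: "\<And>i. 0 \<le> w i \<and> w i \<le> W"
  shows "Q k 0 w h \<le> (4 * W) * (vnorm n h)\<^sup>2"
proof -
  have W: "0 \<le> W" using w[of 0] by linarith
  have "Q k 0 w h \<le> (\<Sum>i<k. W * (trm 0 h i)\<^sup>2)"
    unfolding Q_def using w by (intro sum_mono mult_right_mono) auto
  also have "\<dots> = W * (\<Sum>i<k. (trm 0 h i)\<^sup>2)" by (simp add: sum_distrib_left)
  also have "\<dots> \<le> W * (4 * (vnorm n h)\<^sup>2)" using W trm0_sq_bound[OF kn] by (intro mult_left_mono) auto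
  finally show ?thesis by simp
qed

lemma Q_cut:
  assumes c0: "E = 0 \<Longrightarrow> a = 0 \<or> w 0 = 0" and cE: "0 < E \<Longrightarrow> E < k \<Longrightarrow> w E = 0"
    and w: "\<And>i. 0 \<le> w i"
  shows "Q k a w x = Q k a w (rin E x) + Q k a w (rout E x) - Q k a w vzero"
    and "Q k a w (\<lambda>i. s * rout E y i) - Q k a w vzero = s\<^sup>2 * (Q k a w (rout E y) - Q k a w vzero)"
    and "Q k a w vzero \<le> Q k a w (rout E y)"
proof -
  have t1: "w i * (trm a x i)\<^sup>2 = w i * (trm a (rin E x) i)\<^sup>2 + w i * (trm a (rout E x) i)\<^sup>2 - w i * (trm a vzero i)\<^sup>2"
    if "i < k" for i
  proof -
    consider "i < E" | "E < i" | "i = E" by linarith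
    then show ?thesis
    proof cases
      case 1
      then have "i - 1 < E" by linarith
      then show ?thesis using 1 by (simp add: trm_def rin_def rout_def vzero_def)
    next
      case 2
      then have "\<not> i - 1 < E" "i \<noteq> 0" by linarith+
      then show ?thesis using 2 by (simp add: trm_def rin_def rout_def vzero_def)
    next
      case 3
      show ?thesis
      proof (cases "E = 0")
        case True then show ?thesis using 3 by (simp add: trm_def rin_def rout_def vzero_def)
      next
        case False then have "w i = 0" using cE 3 that by simp
        then show ?thesis by simp
      qed
    qed
  qed
  show "Q k a w x = Q k a w (rin E x) + Q k a w (rout E x) - Q k a w vzero"
    unfolding Q_def sum.distrib[symmetric] sum_subtractf[symmetric] using t1 by (intro sum.cong) auto
  have t2: "w i * (trm a (\<lambda>i. s * rout E y i) i)\<^sup>2 - w i * (trm a vzero i)\<^sup>2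
     = s\<^sup>2 * (w i * (trm a (rout E y) i)\<^sup>2 - w i * (trm a vzero i)\<^sup>2)" for i
  proof (cases "i = 0")
    case False then show ?thesis by (simp add: trm_def vzero_def power2_eq_square algebra_simps)
  next
    case True
    show ?thesis
    proof (cases "E = 0")
      case False then show ?thesis using True by (simp add: trm_def vzero_def rout_def)
    next
      case E: True
      then consider "a = 0" | "w 0 = 0" using c0 by blast
      then show ?thesis
        by cases (simp_all add: True E trm_def vzero_def rout_def power2_eq_square algebra_simps)
    qed
  qed
  show "Q k a w (\<lambda>i. s * rout E y i) - Q k a w vzero = s\<^sup>2 * (Q k a w (rout E y) - Q k a w vzero)"
    unfolding Q_def sum_subtractf[symmetric] sum_distrib_left using t2 by (intro sum.cong) auto
  have t3: "w i * (trm a vzero i)\<^sup>2 \<le> w i * (trm a (rout E y) i)\<^sup>2" for i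
  proof (cases "i = 0")
    case False then show ?thesis using w[of i] by (simp add: trm_def vzero_def)
  next
    case True
    show ?thesis
    proof (cases "E = 0")
      case False then show ?thesis using True by (simp add: trm_def vzero_def rout_def)
    next
      case E: True
      then consider "a = 0" | "w 0 = 0" using c0 by blast
      then show ?thesis
        by cases (use w[of 0] in \<open>simp_all add: True E trm_def vzero_def rout_def\<close>)
    qed
  qed
  show "Q k a w vzero \<le> Q k a w (rout E y)"
    unfolding Q_def using t3 by (intro sum_mono) auto
qed



definition w1 :: "real \<Rightarrow> nat \<Rightarrow> real" where "w1 L i = (if odd i then L / 8 else 0)"
definition w2 :: "real \<Rightarrow> nat \<Rightarrow> real" where "w2 L i = (if even i then L / 8 else 0)"
definition w3 :: "real \<Rightarrow> nat \<Rightarrow> real" where "w3 L i = (if i = 0 then L / 2 else 0)"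

definition fsf :: "nat \<Rightarrow> real \<Rightarrow> real \<Rightarrow> nat \<Rightarrow> vec \<Rightarrow> real" where
  "fsf k a L j = (if j = 0 then Q k a (w1 L) else if j = 1 then Q k a (w2 L) else Q k 0 (w3 L))"

definition cl :: "nat \<Rightarrow> nat \<Rightarrow> nat" where
  "cl j D = (if j = 0 then (if even D then D else D + 1) else if j = 1 then (if odd D then D else D + 1) else D)"

definition simplex3 :: "vec set" where
  "simplex3 = {p\<in>Vsp 3. (\<forall>i<3. 0 \<le> p i) \<and> (\<Sum>i<3. p i) = 1}"

definition p0 :: vec where "p0 = (\<lambda>i. if i < 2 then 1 / 2 else 0)"

definition prb :: "nat \<Rightarrow> nat \<Rightarrow> real \<Rightarrow> real \<Rightarrow> problem" where
  "prb n k a L = \<lparr>dim = n, nw = 3, fs = fsf k a L, Xs = Vsp n, Ps = simplex3, rdom = {p0},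
     rho = (\<lambda>_. 0), udom = Vsp n, u = (\<lambda>_. 0)\<rparr>"

definition dinv :: "nat \<Rightarrow> state \<Rightarrow> bool" where
  "dinv D S = (case S of (Ms, Mp, Md) \<Rightarrow> Ms \<subseteq> Vsp D \<and> (\<forall>j<3. Mp j \<subseteq> Vsp (cl j D) \<and> Md j \<subseteq> Vsp (cl j D)))"

lemma Vsp_mono: "D \<le> D' \<Longrightarrow> Vsp D \<subseteq> Vsp D'"
  by (auto simp: Vsp_def)

lemma vspan_Vsp: assumes "S \<subseteq> Vsp D" shows "vspan S \<subseteq> Vsp D"
proof
  fix v assume "v \<in> vspan S"
  then obtain F c where F: "finite F" "F \<subseteq> S" "v = (\<lambda>i. \<Sum>w\<in>F. c w * w i)" unfolding vspan_def by auto
  show "v \<in> Vsp D" unfolding Vsp_def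
  proof (intro CollectI allI impI)
    fix i assume "D \<le> i"
    then have "\<forall>w\<in>F. w i = 0" using F assms by (auto simp: Vsp_def)
    then show "v i = 0" using F(3) by (auto intro!: sum.neutral)
  qed
qed

lemma cl_le: "D \<le> cl j D" "cl j D \<le> D + 1" "cl j D \<le> cl j (D + 1)"
  by (auto simp: cl_def)

lemma w_nonneg: "0 < L \<Longrightarrow> 0 \<le> w1 L i" "0 < L \<Longrightarrow> 0 \<le> w2 L i" "0 < L \<Longrightarrow> 0 \<le> w3 L i"
  by (auto simp: w1_def w2_def w3_def)

lemma cut_hyps:
  assumes L: "0 < L" and j: "j < 3"
  shows "\<And>x. fsf k a L j x = fsf k a L j (rin (cl j D) x) + fsf k a L j (rout (cl j D) x) - fsf k a L j vzero"
    and "\<And>y s. fsf k a L j (\<lambda>i. s * rout (cl j D) y i) - fsf k a L j vzero = s\<^sup>2 * (fsf k a L j (rout (cl j D) y) - fsf k a L j vzero)"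
    and "\<And>y. fsf k a L j vzero \<le> fsf k a L j (rout (cl j D) y)"
proof -
  have "j = 0 \<or> j = 1 \<or> j = 2" using j by auto
  then have "(\<forall>x. fsf k a L j x = fsf k a L j (rin (cl j D) x) + fsf k a L j (rout (cl j D) x) - fsf k a L j vzero)
    \<and> (\<forall>y s. fsf k a L j (\<lambda>i. s * rout (cl j D) y i) - fsf k a L j vzero = s\<^sup>2 * (fsf k a L j (rout (cl j D) y) - fsf k a L j vzero))
    \<and> (\<forall>y. fsf k a L j vzero \<le> fsf k a L j (rout (cl j D) y))"
  proof (elim disjE)
    assume j0: "j = 0"
    have c0: "cl j D = 0 \<Longrightarrow> a = 0 \<or> w1 L 0 = 0" by (simp add: w1_def)
    have cE: "0 < cl j D \<Longrightarrow> cl j D < k \<Longrightarrow> w1 L (cl j D) = 0" using j0 by (simp add: w1_def cl_def)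
    have fj: "fsf k a L j = Q k a (w1 L)" using j0 by (simp add: fsf_def)
    show ?thesis unfolding fj using Q_cut[OF c0 cE w_nonneg(1)[OF L]] by blast
  next
    assume j1: "j = 1"
    have c0: "cl j D = 0 \<Longrightarrow> a = 0 \<or> w2 L 0 = 0" using j1 by (simp add: cl_def split: if_splits)
    have cE: "0 < cl j D \<Longrightarrow> cl j D < k \<Longrightarrow> w2 L (cl j D) = 0" using j1 by (simp add: w2_def cl_def)
    have fj: "fsf k a L j = Q k a (w2 L)" using j1 by (simp add: fsf_def)
    show ?thesis unfolding fj using Q_cut[OF c0 cE w_nonneg(2)[OF L]] by blast
  next
    assume j2: "j = 2"
    have c0: "cl j D = 0 \<Longrightarrow> (0::real) = 0 \<or> w3 L 0 = 0" by simp
    have cE: "0 < cl j D \<Longrightarrow> cl j D < k \<Longrightarrow> w3 L (cl j D) = 0" by (simp add: w3_def)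
    have fj: "fsf k a L j = Q k 0 (w3 L)" using j2 by (simp add: fsf_def)
    show ?thesis unfolding fj using Q_cut[OF c0 cE w_nonneg(3)[OF L]] by blast
  qed
  then show "\<And>x. fsf k a L j x = fsf k a L j (rin (cl j D) x) + fsf k a L j (rout (cl j D) x) - fsf k a L j vzero"
    and "\<And>y s. fsf k a L j (\<lambda>i. s * rout (cl j D) y i) - fsf k a L j vzero = s\<^sup>2 * (fsf k a L j (rout (cl j D) y) - fsf k a L j vzero)"
    and "\<And>y. fsf k a L j vzero \<le> fsf k a L j (rout (cl j D) y)" by blast+
qed

lemma prox_Vsp:
  assumes x': "x' \<in> prox_set (prb n k a L) \<eta> xb" and eta: "\<eta> > 0" and xb: "xb \<in> Vsp D"
  shows "x' \<in> Vsp D"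
proof -
  have x'V: "x' \<in> Vsp n" and opt: "\<And>x. x \<in> Vsp n \<Longrightarrow> \<eta> / 2 * (vnorm n (vsub x' xb))\<^sup>2 \<le> \<eta> / 2 * (vnorm n (vsub x xb))\<^sup>2"
    using x' by (auto simp: prox_set_def prb_def)
  define r where "r = rin n xb"
  have rV: "r \<in> Vsp n" by (auto simp: Vsp_def r_def rin_def)
  have "vnorm n (vsub r xb) = 0" by (simp add: vnorm_zero_iff r_def rin_def vsub_def)
  then have "\<eta> / 2 * (vnorm n (vsub x' xb))\<^sup>2 \<le> 0" using opt[OF rV] by simp
  then have "(vnorm n (vsub x' xb))\<^sup>2 \<le> 0" using eta by (simp add: mult_le_0_iff)
  then have "vnorm n (vsub x' xb) = 0" by simp
  then have eq: "\<forall>i<n. x' i = xb i" by (simp add: vnorm_zero_iff vsub_def)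
  show ?thesis unfolding Vsp_def
  proof (intro CollectI allI impI)
    fix i assume i: "D \<le> i"
    show "x' i = 0"
    proof (cases "i < n")
      case True then show ?thesis using eq xb i by (auto simp: Vsp_def)
    next
      case False then show ?thesis using x'V by (auto simp: Vsp_def)
    qed
  qed
qed

lemma local_inv:
  assumes "local_step (prb n k a L) S S'" and "dinv D S" and L: "0 < L"
  shows "dinv D S'"
  using assms(1,2)
proof cases
  case (worker i xb Mp pib Md \<tau> \<pi>' Ms)
  have i3: "i < 3" using worker by (simp add: prb_def)
  have sub: "Mp i \<subseteq> Vsp (cl i D)" "Md i \<subseteq> Vsp (cl i D)" "Ms \<subseteq> Vsp D"
     and rest: "\<forall>j<3. Mp j \<subseteq> Vsp (cl j D) \<and> Md j \<subseteq> Vsp (cl j D)"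
    using assms(2) worker i3 by (auto simp: dinv_def)
  have xbV: "xb \<in> Vsp (cl i D)" using worker vspan_Vsp[OF sub(1)] by auto
  have pibV: "pib \<in> Vsp (cl i D)" using worker vspan_Vsp[OF sub(2)] by auto
  have orc: "\<pi>' \<in> worker_oracle n (fsf k a L i) xb pib \<tau>" using worker by (simp add: prb_def)
  have piV: "\<pi>' \<in> Vsp (cl i D)"
    using oracle_support[OF cut_hyps(1)[OF L i3] cut_hyps(2)[OF L i3] cut_hyps(3)[OF L i3] xbV pibV _ orc]
      worker by simp
  show ?thesis using worker sub rest piV xbV pibV by (auto simp: dinv_def)
next
  case (server xb Ms \<eta> x' Mp Md)
  have sub: "Ms \<subseteq> Vsp D" using assms(2) server by (simp add: dinv_def)
  have "x' \<in> Vsp D" using prox_Vsp[of x' n k a L \<eta> xb D] server vspan_Vsp[OF sub] by auto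
  then show ?thesis using assms(2) server by (auto simp: dinv_def)
qed

lemma star_inv:
  assumes "(local_step (prb n k a L))\<^sup>*\<^sup>* S S'" and "dinv D S" and L: "0 < L"
  shows "dinv D S'"
  using assms(1,2) by induction (auto intro: local_inv[OF _ _ L])

lemma comm_inv:
  assumes "comm_round (prb n k a L) S S'" and "dinv D S"
  shows "dinv (D + 1) S'"
proof -
  obtain Ms Mp Md where S: "S = (Ms, Mp, Md)" by (cases S) auto
  have "\<exists>sv rv. (\<forall>i<3. sv i \<in> vspan (Mp i) \<and> rv i \<in> vspan Ms) \<and>
        S' = (Ms \<union> sv ` {..<3}, (\<lambda>i. if i < 3 then Mp i \<union> {rv i} else Mp i), Md)"
    using assms(1) unfolding comm_round_def S by (simp add: prb_def)
  then obtain sv rv where sr: "\<forall>i<3. sv i \<in> vspan (Mp i) \<and> rv i \<in> vspan Ms"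
    and S': "S' = (Ms \<union> sv ` {..<3}, (\<lambda>i. if i < 3 then Mp i \<union> {rv i} else Mp i), Md)"
    by blast
  have I1: "Ms \<subseteq> Vsp D" and I2: "\<And>j. j < 3 \<Longrightarrow> Mp j \<subseteq> Vsp (cl j D)"
    and I3: "\<And>j. j < 3 \<Longrightarrow> Md j \<subseteq> Vsp (cl j D)"
    using assms(2) unfolding S dinv_def by auto
  have m1: "Vsp D \<subseteq> Vsp (D + 1)" by (rule Vsp_mono) simp
  have m2: "\<And>j::nat. Vsp (cl j D) \<subseteq> Vsp (D + 1)" by (rule Vsp_mono) (rule cl_le)
  have m3: "\<And>j::nat. Vsp (cl j D) \<subseteq> Vsp (cl j (D + 1))" by (rule Vsp_mono) (rule cl_le)
  have m4: "\<And>j::nat. Vsp D \<subseteq> Vsp (cl j (D + 1))"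
  proof (rule Vsp_mono)
    fix j :: nat have "D \<le> D + 1" by simp
    then show "D \<le> cl j (D + 1)" using cl_le(1)[of "D + 1" j] by linarith
  qed
  have svV: "\<And>j::nat. j < 3 \<Longrightarrow> sv j \<in> Vsp (D + 1)"
  proof -
    fix j :: nat assume j: "j < 3"
    have "sv j \<in> vspan (Mp j)" using sr j by blast
    also have "\<dots> \<subseteq> Vsp (cl j D)" by (rule vspan_Vsp[OF I2[OF j]])
    finally show "sv j \<in> Vsp (D + 1)" using m2 by blast
  qed
  have rvV: "\<And>j::nat. j < 3 \<Longrightarrow> rv j \<in> Vsp (cl j (D + 1))"
  proof -
    fix j :: nat assume j: "j < 3"
    have "rv j \<in> vspan Ms" using sr j by blast
    also have "\<dots> \<subseteq> Vsp D" by (rule vspan_Vsp[OF I1])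
    finally show "rv j \<in> Vsp (cl j (D + 1))" using m4 by blast
  qed
  have A: "Ms \<union> sv ` {..<3} \<subseteq> Vsp (D + 1)" using I1 m1 svV by blast
  have B: "\<forall>j<3. (if j < 3 then Mp j \<union> {rv j} else Mp j) \<subseteq> Vsp (cl j (D + 1)) \<and> Md j \<subseteq> Vsp (cl j (D + 1))"
  proof (intro allI impI conjI)
    fix j :: nat assume j: "j < 3"
    show "(if j < 3 then Mp j \<union> {rv j} else Mp j) \<subseteq> Vsp (cl j (D + 1))"
      using I2[OF j] m3[of j] rvV[OF j] j by auto
    show "Md j \<subseteq> Vsp (cl j (D + 1))" using I3[OF j] m3[of j] by blast
  qed
  show ?thesis unfolding S' dinv_def using A B by simp
qed

lemma reach_inv:
  assumes "reach (prb n k a L) t S" and L: "0 < L"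
  shows "dinv t S"
  using assms(1)
proof (induction t arbitrary: S)
  case 0
  have "dinv 0 init_state" by (auto simp: dinv_def init_state_def vzero_def Vsp_def)
  then show ?case using 0 star_inv[OF _ _ L] by simp
next
  case (Suc t)
  then obtain S1 S2 where "reach (prb n k a L) t S1" "comm_round (prb n k a L) S1 S2"
    "(local_step (prb n k a L))\<^sup>*\<^sup>* S2 S" by auto
  then show ?case using Suc.IH comm_inv star_inv[OF _ _ L] by (metis Suc_eq_plus1)
qed

lemma outputs_Vsp:
  assumes "reach (prb n k a L) t S" and L: "0 < L"
  shows "outputs (prb n k a L) S \<subseteq> Vsp (t + 1)"
proof -
  obtain Ms Mp Md where S: "S = (Ms, Mp, Md)" by (cases S) auto
  have I: "Ms \<subseteq> Vsp t" "\<forall>j<3. Mp j \<subseteq> Vsp (cl j t)"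
    using reach_inv[OF assms] S by (auto simp: dinv_def)
  have "Ms \<union> (\<Union>i<3. Mp i) \<subseteq> Vsp (t + 1)"
  proof -
    have "Ms \<subseteq> Vsp (t + 1)" using I(1) Vsp_mono[of t "t+1"] by auto
    moreover have "\<And>j. j < 3 \<Longrightarrow> Mp j \<subseteq> Vsp (t + 1)" using I(2) Vsp_mono[OF cl_le(2)] by blast
    ultimately show ?thesis by blast
  qed
  then show ?thesis unfolding S outputs_def by (simp add: prb_def vspan_Vsp)
qed



lemma vnorm_cong: "(\<And>i. i < n \<Longrightarrow> x i = y i) \<Longrightarrow> vnorm n x = vnorm n y"
  unfolding vnorm_def ip_def by (metis (no_types, lifting) lessThan_iff sum.cong)

lemma sum_w3: "0 < k \<Longrightarrow> (\<Sum>i<k. w3 L i * g i) = L / 2 * g 0"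
proof -
  assume k: "0 < k"
  have "\<And>i. w3 L i * g i = (if i = 0 then L / 2 * g i else 0)" by (simp add: w3_def)
  then have "(\<Sum>i<k. w3 L i * g i) = (\<Sum>i<k. if i = 0 then L / 2 * g i else 0)" by simp
  also have "\<dots> = L / 2 * g 0" using k by (simp add: sum.delta)
  finally show ?thesis .
qed

lemma grad_lip_f:
  assumes L: "0 < L" and kn: "k \<le> n" and k: "0 < k" and j: "j < 3"
  shows "grad_lip n (fsf k a L j) L"
proof -
  have b1: "\<And>h. Q k 0 (w1 L) h \<le> L / 2 * (vnorm n h)\<^sup>2"
    using Q_bound_W[OF kn, of "w1 L" "L/8"] L by (simp add: w1_def)
  have b2: "\<And>h. Q k 0 (w2 L) h \<le> L / 2 * (vnorm n h)\<^sup>2"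
    using Q_bound_W[OF kn, of "w2 L" "L/8"] L by (simp add: w2_def)
  have b3: "\<And>h. Q k 0 (w3 L) h \<le> L / 2 * (vnorm n h)\<^sup>2"
  proof -
    fix h
    have "Q k 0 (w3 L) h = L / 2 * (h 0)\<^sup>2"
      unfolding Q_def using sum_w3[OF k, of L "\<lambda>i. (trm 0 h i)\<^sup>2"] by (simp add: trm_def)
    also have "(h 0)\<^sup>2 \<le> (\<Sum>i<n. (h i)\<^sup>2)" using k kn by (intro member_le_sum) auto
    then have "L / 2 * (h 0)\<^sup>2 \<le> L / 2 * (vnorm n h)\<^sup>2" unfolding vnorm_sq using L by simp
    finally show "Q k 0 (w3 L) h \<le> L / 2 * (vnorm n h)\<^sup>2" .
  qed
  have "j = 0 \<or> j = 1 \<or> j = 2" using j by auto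
  then show ?thesis
    using Q_grad_lip[OF kn _ _ b1, of a] Q_grad_lip[OF kn _ _ b2, of a] Q_grad_lip[OF kn _ _ b3, of 0]
      w_nonneg[OF L] L
    by (auto simp: fsf_def)
qed

lemma combo_eq: "combo (prb n k a L) p = (\<lambda>x. p 0 * fsf k a L 0 x + (p 1 * fsf k a L 1 x + p 2 * fsf k a L 2 x))"
  by (rule ext) (simp add: combo_def prb_def eval_nat_numeral lessThan_Suc algebra_simps)

lemma smooth_const_le:
  assumes "grad_lip n f L" "0 \<le> L" shows "smooth_const n f \<le> L"
  unfolding smooth_const_def using assms by (intro cInf_lower) (auto intro: bdd_belowI[of _ 0])

lemma obj_eq: "obj (prb n k a L) x = L / 16 * (\<Sum>i<k. (trm a x i)\<^sup>2)"
proof -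
  have p0S: "p0 \<in> simplex3"
    by (simp add: simplex3_def p0_def Vsp_def numeral_3_eq_3 lessThan_Suc)
  have "Ps (prb n k a L) \<inter> rdom (prb n k a L) = {p0}" using p0S by (auto simp: prb_def)
  then have "obj (prb n k a L) x = combo (prb n k a L) p0 x"
    by (simp add: obj_def prb_def)
  also have "\<dots> = 1/2 * Q k a (w1 L) x + 1/2 * Q k a (w2 L) x"
    unfolding combo_eq by (simp add: p0_def fsf_def)
  also have "\<dots> = L / 16 * (\<Sum>i<k. (trm a x i)\<^sup>2)"
    unfolding Q_def sum_distrib_left sum.distrib[symmetric] by (intro sum.cong) (auto simp: w1_def w2_def)
  finally show ?thesis .
qed

lemma telescope: "(\<Sum>i<Suc D. trm a x i) = a - x D"
  by (induction D) (simp_all add: trm_def)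

lemma cs_count: "(\<Sum>i<N. f i)\<^sup>2 \<le> real N * (\<Sum>i<N. (f i)\<^sup>2)"
proof -
  have "\<bar>\<Sum>i<N. f i\<bar> \<le> (\<Sum>i<N. \<bar>f i\<bar> * \<bar>1\<bar>)" by (simp add: sum_abs)
  also have "\<dots> \<le> L2_set f {..<N} * L2_set (\<lambda>_. 1) {..<N}" by (rule L2_set_mult_ineq)
  finally have h: "\<bar>\<Sum>i<N. f i\<bar> \<le> L2_set f {..<N} * sqrt (real N)" by (simp add: L2_set_constant)
  have "(\<Sum>i<N. f i)\<^sup>2 = \<bar>\<Sum>i<N. f i\<bar>\<^sup>2" by simp
  also have "\<dots> \<le> (L2_set f {..<N} * sqrt (real N))\<^sup>2" using h by (intro power_mono) auto
  also have "\<dots> = real N * (\<Sum>i<N. (f i)\<^sup>2)"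
    by (simp add: power_mult_distrib L2_set_def sum_nonneg)
  finally show ?thesis .
qed



lemma closed_V_simplex3: "closed_V 3 simplex3"
  unfolding closed_V_def
proof (intro conjI allI impI)
  show "simplex3 \<subseteq> Vsp 3" by (auto simp: simplex3_def)
  fix xs x assume h: "(\<forall>k. xs k \<in> simplex3) \<and> x \<in> Vsp 3 \<and> conv_seq 3 xs x"
  then have xs: "\<And>k. xs k \<in> simplex3" and xV: "x \<in> Vsp 3" and cv: "\<And>i. i < 3 \<Longrightarrow> (\<lambda>k. xs k i) \<longlonglongrightarrow> x i"
    by (auto simp: conv_seq_def)
  have nn: "\<forall>i<3. 0 \<le> x i"
  proof (intro allI impI)
    fix i :: nat assume i: "i < 3"
    show "0 \<le> x i" using xs i by (intro LIMSEQ_le_const[OF cv[OF i]]) (auto simp: simplex3_def)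
  qed
  have "(\<lambda>k. \<Sum>i<3. xs k i) \<longlonglongrightarrow> (\<Sum>i<3. x i)" using cv by (intro tendsto_sum) auto
  moreover have "(\<lambda>k. \<Sum>i<3. xs k i) = (\<lambda>k. 1)" using xs by (auto simp: simplex3_def)
  ultimately have "(\<Sum>i<3. x i) = 1" using LIMSEQ_unique tendsto_const by metis
  then show "x \<in> simplex3" using xV nn by (simp add: simplex3_def)
qed

lemma convex_V_simplex3: "convex_V 3 simplex3"
  unfolding convex_V_def
proof (intro conjI ballI allI impI)
  show "simplex3 \<subseteq> Vsp 3" by (auto simp: simplex3_def)
  fix x y and t :: real assume x: "x \<in> simplex3" and y: "y \<in> simplex3" and t: "0 \<le> t \<and> t \<le> 1"
  have s: "(\<Sum>i<3. t * x i + (1 - t) * y i) = t * (\<Sum>i<3. x i) + (1 - t) * (\<Sum>i<3. y i)"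
    by (simp add: sum.distrib sum_distrib_left)
  show "(\<lambda>i. t * x i + (1 - t) * y i) \<in> simplex3"
    using x y t unfolding simplex3_def Vsp_def
    by (auto simp: s intro!: add_nonneg_nonneg mult_nonneg_nonneg)
qed

lemma pcc_zero:
  assumes ne: "D \<noteq> {}" and cv: "convex_V m D"
    and cl: "\<And>xs x. (\<forall>k. xs k \<in> D) \<Longrightarrow> x \<in> Vsp m \<Longrightarrow> conv_seq m xs x \<Longrightarrow> x \<in> D"
  shows "proper_closed_convex m D (\<lambda>_. 0)"
  unfolding proper_closed_convex_def
proof (intro conjI ne cv)
  show "convex_fun_on D (\<lambda>_. 0)" by (simp add: convex_fun_on_def)
  show "closed_fun m D (\<lambda>_. 0)" unfolding closed_fun_def
  proof (intro allI impI conjI)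
    fix xs ts x and t :: real
    assume h: "(\<forall>k. xs k \<in> D \<and> (0::real) \<le> ts k) \<and> x \<in> Vsp m \<and> conv_seq m xs x \<and> ts \<longlonglongrightarrow> t"
    then show "x \<in> D" using cl by blast
    show "0 \<le> t" using h by (intro LIMSEQ_le_const[of ts t]) auto
  qed
qed

lemma p0_simplex: "p0 \<in> simplex3"
  by (simp add: simplex3_def p0_def Vsp_def numeral_3_eq_3 lessThan_Suc)

lemma smooth_prb:
  assumes L: "0 < L" and kn: "k \<le> n" and k: "0 < k"
  shows "smooth_problem (prb n k a L)"
proof -
  have cVn: "convex_V n (Vsp n)" by (auto simp: convex_V_def Vsp_def)
  have clVn: "closed_V n (Vsp n)" by (auto simp: closed_V_def)
  have p0c: "convex_V 3 {p0}" unfolding convex_V_def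
  proof (intro conjI ballI allI impI)
    show "{p0} \<subseteq> Vsp 3" by (auto simp: p0_def Vsp_def)
    fix x y and t :: real assume "x \<in> {p0}" "y \<in> {p0}"
    then show "(\<lambda>i. t * x i + (1 - t) * y i) \<in> {p0}" by (auto simp: algebra_simps)
  qed
  have p0cl: "\<And>xs x. (\<forall>k. xs k \<in> {p0}) \<Longrightarrow> x \<in> Vsp 3 \<Longrightarrow> conv_seq 3 xs x \<Longrightarrow> x \<in> {p0}"
  proof -
    fix xs :: "nat \<Rightarrow> vec" and x :: vec assume a: "\<forall>k. xs k \<in> {p0}" "x \<in> Vsp 3" "conv_seq 3 xs x"
    have "x = p0"
    proof (rule ext)
      fix i show "x i = p0 i"
      proof (cases "i < 3")
        case True
        have "(\<lambda>k. xs k i) \<longlonglongrightarrow> x i" using a(3) True by (simp add: conv_seq_def)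
        moreover have "(\<lambda>k. xs k i) = (\<lambda>k. p0 i)" using a(1) by auto
        ultimately show ?thesis using LIMSEQ_unique tendsto_const by metis
      next
        case False then show ?thesis using a(2) by (simp add: Vsp_def p0_def)
      qed
    qed
    then show "x \<in> {p0}" by simp
  qed
  have f: "\<forall>i<3. convex_fun_on (Vsp n) (fsf k a L i) \<and> (\<exists>L'. grad_lip n (fsf k a L i) L')"
  proof (intro allI impI conjI)
    fix i :: nat assume i: "i < 3"
    show "\<exists>L'. grad_lip n (fsf k a L i) L'" using grad_lip_f[OF L kn k i] by blast
    show "convex_fun_on (Vsp n) (fsf k a L i)"
      using Q_convex w_nonneg[OF L] by (simp add: fsf_def)
  qed
  have pcc1: "proper_closed_convex 3 {p0} (\<lambda>_. 0)" by (rule pcc_zero[OF _ p0c p0cl]) simp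
  have pcc2: "proper_closed_convex n (Vsp n) (\<lambda>_. 0)"
    by (rule pcc_zero[OF _ cVn]) (auto simp: Vsp_def)
  have sub: "simplex3 \<subseteq> {p \<in> Vsp 3. (\<forall>i<3. 0 \<le> p i) \<and> (\<Sum>i<3. p i) = 1}"
    by (simp add: simplex3_def)
  have ne: "simplex3 \<inter> {p0} \<noteq> {}" using p0_simplex by blast
  have fs: "\<forall>i<3. convex_fun_on (Vsp n) (fs (prb n k a L) i) \<and> (\<exists>L'. grad_lip n (fs (prb n k a L) i) L')"
    using f by (simp add: prb_def)
  have eqs: "dim (prb n k a L) = n" "nw (prb n k a L) = 3" "Xs (prb n k a L) = Vsp n"
    "Ps (prb n k a L) = simplex3" "rdom (prb n k a L) = {p0}" "rho (prb n k a L) = (\<lambda>_. 0)"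
    "udom (prb n k a L) = Vsp n" "u (prb n k a L) = (\<lambda>_. 0)" by (simp_all add: prb_def)
  show ?thesis unfolding smooth_problem_def Let_def eqs
    using clVn cVn sub closed_V_simplex3 convex_V_simplex3 ne pcc1 pcc2 fs
    by (simp only: eqs) simp
qed



lemma Q3_bound:
  assumes L: "0 < L" and kn: "k \<le> n" and k: "0 < k"
  shows "Q k 0 (w3 L) h \<le> L / 2 * (vnorm n h)\<^sup>2"
proof -
  have "Q k 0 (w3 L) h = L / 2 * (h 0)\<^sup>2"
    unfolding Q_def using sum_w3[OF k, of L "\<lambda>i. (trm 0 h i)\<^sup>2"] by (simp add: trm_def)
  also have "(h 0)\<^sup>2 \<le> (\<Sum>i<n. (h i)\<^sup>2)" using k kn by (intro member_le_sum) auto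
  then have "L / 2 * (h 0)\<^sup>2 \<le> L / 2 * (vnorm n h)\<^sup>2" unfolding vnorm_sq using L by simp
  finally show ?thesis .
qed

lemma vnorm_dlt0: "0 < n \<Longrightarrow> vnorm n (\<lambda>m. c * dlt 0 m) = \<bar>c\<bar>"
proof -
  assume n: "0 < n"
  have "(vnorm n (\<lambda>m. c * dlt 0 m))\<^sup>2 = (\<Sum>i<n. if i = 0 then c\<^sup>2 else 0)"
    unfolding vnorm_sq by (intro sum.cong) (auto simp: dlt_def)
  also have "\<dots> = c\<^sup>2" using n by (simp add: sum.delta)
  finally have "(vnorm n (\<lambda>m. c * dlt 0 m))\<^sup>2 = \<bar>c\<bar>\<^sup>2" by simp
  then show ?thesis using vnorm_nonneg by (metis abs_ge_zero power2_eq_iff_nonneg)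
qed

lemma QG3: assumes k: "0 < k" shows "QG k 0 (w3 L) z = (\<lambda>m. (L * z 0) * dlt 0 m)"
proof (rule ext)
  fix m
  have "QG k 0 (w3 L) z m = 2 * (L / 2 * (trm 0 z 0 * trm 0 (dlt m) 0))"
    unfolding QG_def using sum_w3[OF k, of L "\<lambda>i. trm 0 z i * trm 0 (dlt m) i"] by (simp add: mult.assoc)
  also have "\<dots> = (L * z 0) * dlt 0 m" by (simp add: trm_def dlt_def)
  finally show "QG k 0 (w3 L) z m = (L * z 0) * dlt 0 m" .
qed

lemma smooth_exact:
  assumes L: "0 < L" and kn: "k \<le> n" and k: "0 < k" and g: "grad_lip n (Q k 0 (w3 L)) L'"
  shows "L \<le> L'"
proof -
  have n: "0 < n" using k kn by linarith
  obtain G where G: "\<forall>x\<in>Vsp n. has_grad n (Q k 0 (w3 L)) (G x) x"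
     "\<forall>x\<in>Vsp n. \<forall>y\<in>Vsp n. vnorm n (vsub (G x) (G y)) \<le> L' * vnorm n (vsub x y)"
    using g unfolding grad_lip_def by blast
  define d where "d = dlt 0"
  have dV: "d \<in> Vsp n" using n by (auto simp: d_def dlt_def Vsp_def)
  have zV: "vzero \<in> Vsp n" by (simp add: vzero_def Vsp_def)
  have hg: "\<And>x. has_grad n (Q k 0 (w3 L)) (QG k 0 (w3 L) x) x"
    using Q_has_grad[OF kn _ _ Q3_bound[OF L kn k]] w_nonneg[OF L] L by simp
  have u1: "\<forall>i<n. G d i = QG k 0 (w3 L) d i" using has_grad_unique[OF _ hg] G dV by blast
  have u2: "\<forall>i<n. G vzero i = QG k 0 (w3 L) vzero i" using has_grad_unique[OF _ hg] G zV by blast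
  have "vnorm n (vsub (G d) (G vzero)) = vnorm n (vsub (QG k 0 (w3 L) d) (QG k 0 (w3 L) vzero))"
    using u1 u2 by (intro vnorm_cong) (simp add: vsub_def)
  also have "\<dots> = vnorm n (QG k 0 (w3 L) (vsub d vzero))" by (simp add: QG_diff)
  also have "\<dots> = L" unfolding QG3[OF k] using vnorm_dlt0[OF n, of "L * vsub d vzero 0"] L
    by (simp add: vsub_def d_def dlt_def vzero_def)
  finally have a: "vnorm n (vsub (G d) (G vzero)) = L" .
  have b: "vnorm n (vsub d vzero) = 1"
    using vnorm_dlt0[OF n, of 1] by (simp add: vsub_def d_def vzero_def)
  show ?thesis using G(2) dV zV a b by force
qed

lemma agg_prb:
  assumes L: "0 < L" and kn: "k \<le> n" and k: "0 < k"
  shows "agg_smooth (prb n k a L) L"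
  unfolding agg_smooth_def
proof (intro conjI ballI)
  have dim: "dim (prb n k a L) = n" by (simp add: prb_def)
  fix p assume "p \<in> Ps (prb n k a L)"
  then have p: "p \<in> simplex3" by (simp add: prb_def)
  have nn: "0 \<le> p 0" "0 \<le> p 1" "0 \<le> p 2" and s: "p 0 + p 1 + p 2 = 1"
    using p by (auto simp: simplex3_def eval_nat_numeral lessThan_Suc)
  have gl: "\<And>j. j < 3 \<Longrightarrow> grad_lip n (fsf k a L j) L" using grad_lip_f[OF L kn k] by blast
  have "grad_lip n (\<lambda>x. p 0 * fsf k a L 0 x + (p 1 * fsf k a L 1 x + p 2 * fsf k a L 2 x))
     (p 0 * L + 1 * (p 1 * L + p 2 * L))"
    using grad_lip_comb[OF gl[of 0] grad_lip_comb[OF gl[of 1] gl[of 2] nn(2,3)] nn(1), of 1] by simp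
  moreover have "p 0 * L + 1 * (p 1 * L + p 2 * L) = L"
  proof -
    have "p 0 * L + 1 * (p 1 * L + p 2 * L) = (p 0 + p 1 + p 2) * L" by (simp add: algebra_simps)
    then show ?thesis using s by simp
  qed
  ultimately have "grad_lip n (combo (prb n k a L) p) L" unfolding combo_eq by simp
  then show "smooth_const (dim (prb n k a L)) (combo (prb n k a L) p) \<le> L"
    unfolding dim using L by (intro smooth_const_le) auto
next
  define e2 where "e2 = (\<lambda>i::nat. if i = 2 then (1::real) else 0)"
  have e2S: "e2 \<in> Ps (prb n k a L)"
    by (simp add: prb_def simplex3_def e2_def Vsp_def numeral_3_eq_3 lessThan_Suc)
  have ce: "combo (prb n k a L) e2 = Q k 0 (w3 L)"
    unfolding combo_eq by (rule ext) (simp add: e2_def fsf_def)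
  have gl: "grad_lip n (Q k 0 (w3 L)) L" using grad_lip_f[OF L kn k, of 2 a] by (simp add: fsf_def)
  have "smooth_const n (Q k 0 (w3 L)) = L"
    unfolding smooth_const_def
  proof (rule cInf_eq_minimum)
    show "L \<in> {L'. 0 \<le> L' \<and> grad_lip n (Q k 0 (w3 L)) L'}" using gl L by simp
    fix x assume "x \<in> {L'. 0 \<le> L' \<and> grad_lip n (Q k 0 (w3 L)) L'}"
    then show "L \<le> x" using smooth_exact[OF L kn k] by blast
  qed
  then show "\<exists>p\<in>Ps (prb n k a L). smooth_const (dim (prb n k a L)) (combo (prb n k a L) p) = L"
    using e2S ce by (intro bexI[of _ e2]) (auto simp: prb_def)
qed



lemma final_arith:
  fixes K kr T :: real
  assumes K: "0 < K" and kr: "kr = of_int \<lceil>K / 8\<rceil>" and T: "0 \<le> T"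
    and h: "K\<^sup>2 \<le> 16 * kr * (T + 2)"
  shows "1 / 8 * K \<le> T + 1"
proof (cases "K < 8")
  case True then show ?thesis using T by simp
next
  case False
  have "kr < K / 8 + 1" using ceiling_correct[of "K/8"] kr by linarith
  then have kr4: "kr \<le> K / 4" using False by simp
  have "K * K \<le> 16 * (K / 4) * (T + 2)"
    using h kr4 T by (smt (verit) mult_right_mono power2_eq_square)
  then have "K * K \<le> K * (4 * (T + 2))" by (simp add: algebra_simps)
  then have "K \<le> 4 * (T + 2)" using K by simp
  then show ?thesis using T by simp
qed

lemma sum_indicator_less:
  assumes "k \<le> n" shows "(\<Sum>i<n. if i < k then c else 0) = real k * (c::real)"
proof -
  have "(\<Sum>i<n. if i < k then c else 0) = (\<Sum>i<k. c)"
    using assms by (intro sum.mono_neutral_cong_right) auto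
  then show ?thesis by simp
qed

theorem theorem5p2:
  shows "\<exists>c>0. \<forall>Lf R0 \<epsilon> n. Lf > 0 \<longrightarrow> R0 \<ge> 1 \<longrightarrow> \<epsilon> > 0 \<longrightarrow>
     real n > 2 * real_of_int \<lceil>sqrt Lf * R0 / (8 * sqrt \<epsilon>)\<rceil> \<longrightarrow>
     (\<exists>pr. dim pr = n \<and> smooth_problem pr \<and> agg_smooth pr Lf \<and>
        (\<exists>xs. is_opt pr xs \<and> vnorm n (vsub vzero xs) \<le> R0) \<and>
        (\<forall>t S x. reach pr t S \<and> x \<in> outputs pr S \<and> eps_opt pr \<epsilon> x \<longrightarrow>
            c * (sqrt Lf * R0 / sqrt \<epsilon>) \<le> real t + 1))"
proof (intro exI[of _ "1/8::real"] conjI allI impI)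
  show "(0::real) < 1 / 8" by simp
  fix Lf R0 \<epsilon> :: real and n :: nat
  assume Lf: "Lf > 0" and R0: "R0 \<ge> 1" and eps: "\<epsilon> > 0"
    and nK: "real n > 2 * real_of_int \<lceil>sqrt Lf * R0 / (8 * sqrt \<epsilon>)\<rceil>"
  define K where "K = sqrt Lf * R0 / sqrt \<epsilon>"
  have K: "K > 0" using Lf R0 eps by (simp add: K_def)
  have K8: "sqrt Lf * R0 / (8 * sqrt \<epsilon>) = K / 8" by (simp add: K_def)
  define ci where "ci = \<lceil>K / 8\<rceil>"
  have ci1: "1 \<le> ci" using K by (simp add: ci_def)
  define k where "k = nat ci"
  have kr: "real k = of_int ci" using ci1 by (simp add: k_def)
  have k0: "0 < k" using ci1 by (simp add: k_def)
  have kn: "k \<le> n" using nK kr ci1 unfolding K8 ci_def[symmetric] by linarith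
  define a where "a = R0 / sqrt (real k)"
  have a2: "a\<^sup>2 = R0\<^sup>2 / real k" using k0 by (simp add: a_def power_divide)
  define pr where "pr = prb n k a Lf"
  define xst where "xst = (\<lambda>i::nat. if i < k then a else 0)"
  have trm_xst: "\<And>i. i < k \<Longrightarrow> trm a xst i = 0" by (auto simp: trm_def xst_def)
  have obj_xst: "obj pr xst = 0" unfolding pr_def obj_eq using trm_xst by simp
  have obj_nn: "\<And>x. 0 \<le> obj pr x" unfolding pr_def obj_eq using Lf by (simp add: sum_nonneg)
  have xstV: "xst \<in> Vsp n" using kn by (auto simp: Vsp_def xst_def)
  have opt: "is_opt pr xst" unfolding is_opt_def using xstV obj_xst obj_nn by (simp add: pr_def prb_def)
  have nrm: "vnorm n (vsub vzero xst) \<le> R0"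
  proof -
    have "(vnorm n (vsub vzero xst))\<^sup>2 = (\<Sum>i<n. if i < k then a\<^sup>2 else 0)"
      unfolding vnorm_sq by (intro sum.cong) (auto simp: vsub_def vzero_def xst_def)
    also have "\<dots> = real k * a\<^sup>2" using kn by (rule sum_indicator_less)
    also have "\<dots> = R0\<^sup>2" using k0 a2 by simp
    finally have "(vnorm n (vsub vzero xst))\<^sup>2 = R0\<^sup>2" .
    then show ?thesis using R0 vnorm_nonneg by (metis order.refl power2_eq_iff_nonneg order_trans zero_le_one)
  qed
  have lb: "\<forall>t S x. reach pr t S \<and> x \<in> outputs pr S \<and> eps_opt pr \<epsilon> x \<longrightarrow> 1 / 8 * K \<le> real t + 1"
  proof (intro allI impI)
    fix t S x assume h: "reach pr t S \<and> x \<in> outputs pr S \<and> eps_opt pr \<epsilon> x"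
    have xV: "x \<in> Vsp (t + 1)" using outputs_Vsp[of n k a Lf t S] h Lf unfolding pr_def by blast
    have objx: "obj pr x \<le> \<epsilon>" using h opt obj_xst unfolding eps_opt_def by force
    show "1 / 8 * K \<le> real t + 1"
    proof (cases "k \<le> t + 1")
      case True
      have "K / 8 \<le> real k" using kr by (simp add: ci_def)
      then show ?thesis using True by simp
    next
      case False
      define D where "D = t + 1"
      have xD: "x D = 0" using xV by (simp add: Vsp_def D_def)
      have "a = (\<Sum>i<Suc D. trm a x i)" using telescope[of a x D] xD by simp
      then have "a\<^sup>2 \<le> real (Suc D) * (\<Sum>i<Suc D. (trm a x i)\<^sup>2)" using cs_count by metis
      also have "(\<Sum>i<Suc D. (trm a x i)\<^sup>2) \<le> (\<Sum>i<k. (trm a x i)\<^sup>2)"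
        using False by (intro sum_mono2) (auto simp: D_def)
      then have "real (Suc D) * (\<Sum>i<Suc D. (trm a x i)\<^sup>2) \<le> real (Suc D) * (\<Sum>i<k. (trm a x i)\<^sup>2)"
        by (intro mult_left_mono) auto
      finally have A: "a\<^sup>2 \<le> real (Suc D) * (\<Sum>i<k. (trm a x i)\<^sup>2)" .
      have B: "Lf / 16 * (\<Sum>i<k. (trm a x i)\<^sup>2) \<le> \<epsilon>" using objx unfolding pr_def obj_eq .
      have "Lf * a\<^sup>2 \<le> 16 * \<epsilon> * real (Suc D)"
      proof -
        have "Lf * a\<^sup>2 \<le> Lf * (real (Suc D) * (\<Sum>i<k. (trm a x i)\<^sup>2))" using A Lf by simp
        also have "\<dots> = 16 * real (Suc D) * (Lf / 16 * (\<Sum>i<k. (trm a x i)\<^sup>2))" by simp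
        also have "\<dots> \<le> 16 * real (Suc D) * \<epsilon>" using B by (intro mult_left_mono) auto
        also have "\<dots> = 16 * \<epsilon> * real (Suc D)" by (simp only: mult_ac)
        finally show ?thesis .
      qed
      then have "Lf * R0\<^sup>2 \<le> 16 * \<epsilon> * real (Suc D) * real k"
        unfolding a2 using k0 by (simp add: field_simps)
      moreover have "K\<^sup>2 = Lf * R0\<^sup>2 / \<epsilon>"
        unfolding K_def using Lf eps by (simp add: power_divide power_mult_distrib)
      ultimately have "\<epsilon> * K\<^sup>2 \<le> \<epsilon> * (16 * real k * (real t + 2))"
        using eps by (simp add: field_simps D_def)
      then have "K\<^sup>2 \<le> 16 * real k * (real t + 2)" using eps by simp
      then show ?thesis using final_arith[OF K _ _, of "real k" "real t"] kr ci_def by simp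
    qed
  qed
  show "\<exists>pr. dim pr = n \<and> smooth_problem pr \<and> agg_smooth pr Lf \<and>
        (\<exists>xs. is_opt pr xs \<and> vnorm n (vsub vzero xs) \<le> R0) \<and>
        (\<forall>t S x. reach pr t S \<and> x \<in> outputs pr S \<and> eps_opt pr \<epsilon> x \<longrightarrow>
            1 / 8 * (sqrt Lf * R0 / sqrt \<epsilon>) \<le> real t + 1)"
  proof (intro exI[of _ pr] conjI)
    show "dim pr = n" by (simp add: pr_def prb_def)
    show "smooth_problem pr" unfolding pr_def using smooth_prb[OF Lf kn k0] .
    show "agg_smooth pr Lf" unfolding pr_def using agg_prb[OF Lf kn k0] .
    show "\<exists>xs. is_opt pr xs \<and> vnorm n (vsub vzero xs) \<le> R0" using opt nrm by blast
    show "\<forall>t S x. reach pr t S \<and> x \<in> outputs pr S \<and> eps_opt pr \<epsilon> x \<longrightarrow>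
            1 / 8 * (sqrt Lf * R0 / sqrt \<epsilon>) \<le> real t + 1" using lb unfolding K_def .
  qed
qed


end
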